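(* A formula $\varphi\in\mathcal{L}$ is valid in all constructive Chellas models if and only if it is derivable in $\mathsf{ConstCK}$.
   Context: Language $\mathcal{L}$: formulas $\varphi ::= p \mid \bot \mid \varphi\wedge\varphi \mid \varphi\vee\varphi \mid \varphi\to\varphi \mid \varphi \mathrel{\Box\!\!\to} \varphi \mid \varphi \mathrel{\Diamond\!\!\to}\varphi$; $\neg\varphi:=\varphi\to\bot$, $\top:=\neg\bot$, $\varphi\leftrightarrow\psi:=(\varphi\to\psi)\wedge(\psi\to\varphi)$. $\mathsf{ConstCK}$: any axiomatisation of intuitionistic propositional logic in $\mathcal{L}$ with modus ponens, plus axioms CM$_\Box$: $(\varphi\mathrel{\Box\!\!\to}\psi\wedge\chi)\to(\varphi\mathrel{\Box\!\!\to}\psi)\wedge(\varphi\mathrel{\Box\!\!\to}\chi)$; CC$_\Box$: $(\varphi\mathrel{\Box\!\!\to}\psi)\wedge(\varphi\mathrel{\Box\!\!\to}\chi)\to(\varphi\mathrel{\Box\!\!\to}\psi\wedge\chi)$; CN$_\Box$: $\varphi\mathrel{\Box\!\!\to}\top$; CN$_\Diamond$: $\neg(\varphi\mathrel{\Diamond\!\!\to}\bot)$; CK$_\Diamond$: $(\varphi\mathrel{\Box\!\!\to}(\psi\to\chi))\to((\varphi\mathrel{\Diamond\!\!\to}\psi)\to(\varphi\mathrel{\Diamond\!\!\to}\chi))$; rules RA$_\Box$: from $\varphi\leftrightarrow\rho$ infer $(\varphi\mathrel{\Box\!\!\to}\psi)\leftrightarrow(\rho\mathrel{\Box\!\!\to}\psi)$;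 RC$_\Box$: from $\psi\leftrightarrow\chi$ infer $(\varphi\mathrel{\Box\!\!\to}\psi)\leftrightarrow(\varphi\mathrel{\Box\!\!\to}\chi)$; RA$_\Diamond$, RC$_\Diamond$: the same with $\mathrel{\Diamond\!\!\to}$. A constructive Chellas model is $M=\langle W,\le,R,V\rangle$ with $W$ a nonempty set, $\le$ a reflexive transitive relation on $W$, $V:W\to 2^{Atm}$ monotone ($w\le w'$ implies $V(w)\subseteq V(w')$), and $R$ associating to each $X\subseteq W$ a binary relation $R_X$ on $W$. Satisfaction: $w\Vdash p$ iff $p\in V(w)$; $w\not\Vdash\bot$; $\wedge,\vee$ pointwise; $w\Vdash\varphi\to\psi$ iff for all $w'\ge w$, $w'\Vdash\varphi$ implies $w'\Vdash\psi$; with $[\varphi]=\{w\mid w\Vdash\varphi\}$: $w\Vdash\varphi\mathrel{\Box\!\!\to}\psi$ iff for all $w',v$ with $w\le w'$ and $w'R_{[\varphi]}v$, $v\Vdash\psi$; $w\Vdash\varphi\mathrel{\Diamond\!\!\to}\psi$ iff for all $w'\ge w$ there is $v$ with $w'R_{[\varphi]}v$ and $v\Vdash\psi$. A formula is valid in $M$ if satisfied at every world of $M$. *)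

theory Defs
  imports Main
begin

datatype 'a fm =
    Atom 'a
  | Bot
  | Conj "'a fm" "'a fm"
  | Disj "'a fm" "'a fm"
  | Imp "'a fm" "'a fm"
  | BoxTo "'a fm" "'a fm"
  | DiaTo "'a fm" "'a fm"

definition Neg :: "'a fm \<Rightarrow> 'a fm" where "Neg \<phi> = Imp \<phi> Bot"
definition Top :: "'a fm" where "Top = Neg Bot"
definition Iff :: "'a fm \<Rightarrow> 'a fm \<Rightarrow> 'a fm" where
  "Iff \<phi> \<psi> = Conj (Imp \<phi> \<psi>) (Imp \<psi> \<phi>)"

inductive ConstCK :: "'a fm \<Rightarrow> bool" where
  K:   "ConstCK (Imp \<phi> (Imp \<psi> \<phi>))"
| S:   "ConstCK (Imp (Imp \<phi> (Imp \<psi> \<chi>)) (Imp (Imp \<phi> \<psi>) (Imp \<phi> \<chi>)))"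
| C1:  "ConstCK (Imp (Conj \<phi> \<psi>) \<phi>)"
| C2:  "ConstCK (Imp (Conj \<phi> \<psi>) \<psi>)"
| C3:  "ConstCK (Imp \<phi> (Imp \<psi> (Conj \<phi> \<psi>)))"
| D1:  "ConstCK (Imp \<phi> (Disj \<phi> \<psi>))"
| D2:  "ConstCK (Imp \<psi> (Disj \<phi> \<psi>))"
| D3:  "ConstCK (Imp (Imp \<phi> \<chi>) (Imp (Imp \<psi> \<chi>) (Imp (Disj \<phi> \<psi>) \<chi>)))"
| EFQ: "ConstCK (Imp Bot \<phi>)"
| MP:  "ConstCK (Imp \<phi> \<psi>) \<Longrightarrow> ConstCK \<phi> \<Longrightarrow> ConstCK \<psi>"
| CMbox: "ConstCK (Imp (BoxTo \<phi> (Conj \<psi> \<chi>)) (Conj (BoxTo \<phi> \<psi>) (BoxTo \<phi> \<chi>)))"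
| CCbox: "ConstCK (Imp (Conj (BoxTo \<phi> \<psi>) (BoxTo \<phi> \<chi>)) (BoxTo \<phi> (Conj \<psi> \<chi>)))"
| CNbox: "ConstCK (BoxTo \<phi> Top)"
| CNdia: "ConstCK (Neg (DiaTo \<phi> Bot))"
| CKdia: "ConstCK (Imp (BoxTo \<phi> (Imp \<psi> \<chi>)) (Imp (DiaTo \<phi> \<psi>) (DiaTo \<phi> \<chi>)))"
| RAbox: "ConstCK (Iff \<phi> \<rho>) \<Longrightarrow> ConstCK (Iff (BoxTo \<phi> \<psi>) (BoxTo \<rho> \<psi>))"
| RCbox: "ConstCK (Iff \<psi> \<chi>) \<Longrightarrow> ConstCK (Iff (BoxTo \<phi> \<psi>) (BoxTo \<phi> \<chi>))"
| RAdia: "ConstCK (Iff \<phi> \<rho>) \<Longrightarrow> ConstCK (Iff (DiaTo \<phi> \<psi>) (DiaTo \<rho> \<psi>))"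
| RCdia: "ConstCK (Iff \<psi> \<chi>) \<Longrightarrow> ConstCK (Iff (DiaTo \<phi> \<psi>) (DiaTo \<phi> \<chi>))"

record ('w, 'a) cmodel =
  worlds :: "'w set"
  leq :: "'w \<Rightarrow> 'w \<Rightarrow> bool"
  rel :: "'w set \<Rightarrow> 'w \<Rightarrow> 'w \<Rightarrow> bool"
  val :: "'w \<Rightarrow> 'a set"

definition is_cmodel :: "('w, 'a) cmodel \<Rightarrow> bool" where
  "is_cmodel M \<longleftrightarrow>
     worlds M \<noteq> {} \<and>
     (\<forall>w\<in>worlds M. leq M w w) \<and>
     (\<forall>u\<in>worlds M. \<forall>v\<in>worlds M. \<forall>w\<in>worlds M. leq M u v \<longrightarrow> leq M v w \<longrightarrow> leq M u w) \<and>
     (\<forall>u v. leq M u v \<longrightarrow> u \<in> worlds M \<and> v \<in> worlds M) \<and>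
     (\<forall>u v. leq M u v \<longrightarrow> val M u \<subseteq> val M v) \<and>
     (\<forall>X u v. rel M X u v \<longrightarrow> u \<in> worlds M \<and> v \<in> worlds M)"

fun sat :: "('w, 'a) cmodel \<Rightarrow> 'w \<Rightarrow> 'a fm \<Rightarrow> bool" where
  "sat M w (Atom p) \<longleftrightarrow> p \<in> val M w"
| "sat M w Bot \<longleftrightarrow> False"
| "sat M w (Conj \<phi> \<psi>) \<longleftrightarrow> sat M w \<phi> \<and> sat M w \<psi>"
| "sat M w (Disj \<phi> \<psi>) \<longleftrightarrow> sat M w \<phi> \<or> sat M w \<psi>"
| "sat M w (Imp \<phi> \<psi>) \<longleftrightarrow>
     (\<forall>w'\<in>worlds M. leq M w w' \<longrightarrow> sat M w' \<phi> \<longrightarrow> sat M w' \<psi>)"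
| "sat M w (BoxTo \<phi> \<psi>) \<longleftrightarrow>
     (\<forall>w'\<in>worlds M. \<forall>v\<in>worlds M. leq M w w' \<longrightarrow>
        rel M {u\<in>worlds M. sat M u \<phi>} w' v \<longrightarrow> sat M v \<psi>)"
| "sat M w (DiaTo \<phi> \<psi>) \<longleftrightarrow>
     (\<forall>w'\<in>worlds M. leq M w w' \<longrightarrow>
        (\<exists>v\<in>worlds M. rel M {u\<in>worlds M. sat M u \<phi>} w' v \<and> sat M v \<psi>))"

definition valid_in :: "('w, 'a) cmodel \<Rightarrow> 'a fm \<Rightarrow> bool" where
  "valid_in M \<phi> \<longleftrightarrow> (\<forall>w\<in>worlds M. sat M w \<phi>)"

end

theory Submission
  imports Defs
begin

lemma cm_trans: "is_cmodel M \<Longrightarrow> leq M u v \<Longrightarrow> leq M v w \<Longrightarrow> leq M u w"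
  unfolding is_cmodel_def by blast
lemma cm_refl: "is_cmodel M \<Longrightarrow> w \<in> worlds M \<Longrightarrow> leq M w w"
  unfolding is_cmodel_def by blast
lemma cm_leqW: "is_cmodel M \<Longrightarrow> leq M u v \<Longrightarrow> u \<in> worlds M \<and> v \<in> worlds M"
  unfolding is_cmodel_def by blast
lemma cm_val: "is_cmodel M \<Longrightarrow> leq M u v \<Longrightarrow> val M u \<subseteq> val M v"
  unfolding is_cmodel_def by blast

lemma persist:
  assumes M: "is_cmodel M"
  shows "leq M w w' \<Longrightarrow> sat M w \<phi> \<Longrightarrow> sat M w' \<phi>"
proof (induction \<phi> arbitrary: w w')
  case (Atom x)
  then show ?case using cm_val[OF M] by auto
next
  case (Imp \<phi>1 \<phi>2)
  show ?case unfolding sat.simps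
  proof (intro ballI impI)
    fix u assume "u \<in> worlds M" "leq M w' u" "sat M u \<phi>1"
    then show "sat M u \<phi>2" using Imp.prems cm_trans[OF M, of w w' u] by simp
  qed
next
  case (BoxTo \<phi>1 \<phi>2)
  show ?case unfolding sat.simps
  proof (intro ballI impI)
    fix u v assume "u \<in> worlds M" "v \<in> worlds M" "leq M w' u" "rel M {u \<in> worlds M. sat M u \<phi>1} u v"
    then show "sat M v \<phi>2" using BoxTo.prems cm_trans[OF M, of w w' u] by simp
  qed
next
  case (DiaTo \<phi>1 \<phi>2)
  show ?case unfolding sat.simps
  proof (intro ballI impI)
    fix u assume "u \<in> worlds M" "leq M w' u"
    then show "\<exists>v\<in>worlds M. rel M {u \<in> worlds M. sat M u \<phi>1} u v \<and> sat M v \<phi>2"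
      using DiaTo.prems cm_trans[OF M, of w w' u] by simp
  qed
qed auto

lemma sat_Top[simp]: "sat M w Top" by (simp add: Top_def Neg_def)
lemma sat_Iff: "sat M w (Iff \<phi> \<psi>) \<longleftrightarrow> (\<forall>w'\<in>worlds M. leq M w w' \<longrightarrow> (sat M w' \<phi> \<longleftrightarrow> sat M w' \<psi>))"
  by (auto simp add: Iff_def)

lemma valid_Iff_eq:
  assumes M: "is_cmodel M" and H: "\<And>w. w \<in> worlds M \<Longrightarrow> sat M w (Iff \<phi> \<rho>)"
  shows "{u\<in>worlds M. sat M u \<phi>} = {u\<in>worlds M. sat M u \<rho>}"
  using H cm_refl[OF M] unfolding sat_Iff by blast

lemma valid_Iff_eq2:
  assumes M: "is_cmodel M" and H: "\<And>w. w \<in> worlds M \<Longrightarrow> sat M w (Iff \<phi> \<rho>)"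
  shows "u \<in> worlds M \<Longrightarrow> sat M u \<phi> = sat M u \<rho>"
  using H cm_refl[OF M] unfolding sat_Iff by blast

lemma sound:
  assumes "ConstCK \<phi>" and M: "is_cmodel M"
  shows "w \<in> worlds M \<Longrightarrow> sat M w \<phi>"
  using assms(1)
proof (induction arbitrary: w rule: ConstCK.induct)
  case (K \<phi> \<psi>)
  then show ?case using persist[OF M] cm_trans[OF M] by auto
next
  case (S \<phi> \<psi> \<chi>)
  show ?case unfolding sat.simps
  proof (intro ballI impI)
    fix a b c assume a: "a \<in> worlds M" "leq M w a" "\<forall>w'\<in>worlds M. leq M a w' \<longrightarrow> sat M w' \<phi> \<longrightarrow>
             (\<forall>w'a\<in>worlds M. leq M w' w'a \<longrightarrow> sat M w'a \<psi> \<longrightarrow> sat M w'a \<chi>)"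
      and b: "b \<in> worlds M" "leq M a b" "\<forall>w'\<in>worlds M. leq M b w' \<longrightarrow> sat M w' \<phi> \<longrightarrow> sat M w' \<psi>"
      and c: "c \<in> worlds M" "leq M b c" "sat M c \<phi>"
    have ac: "leq M a c" using cm_trans[OF M] a b c by blast
    have "sat M c \<psi>" using b c cm_refl[OF M] by blast
    then show "sat M c \<chi>" using a(3) c ac cm_refl[OF M] by blast
  qed
next
  case (C3 \<phi> \<psi>)
  then show ?case using persist[OF M] by auto
next
  case (D3 \<phi> \<chi> \<psi>)
  show ?case unfolding sat.simps
  proof (intro ballI impI)
    fix a b c assume a: "a \<in> worlds M" "leq M w a" "\<forall>w'\<in>worlds M. leq M a w' \<longrightarrow> sat M w' \<phi> \<longrightarrow> sat M w' \<chi>"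
      and b: "b \<in> worlds M" "leq M a b" "\<forall>w'\<in>worlds M. leq M b w' \<longrightarrow> sat M w' \<psi> \<longrightarrow> sat M w' \<chi>"
      and c: "c \<in> worlds M" "leq M b c" "sat M c \<phi> \<or> sat M c \<psi>"
    have ac: "leq M a c" using cm_trans[OF M] a b c by blast
    show "sat M c \<chi>" using a(3) b(3) c ac by blast
  qed
next
  case (MP \<phi> \<psi>)
  then show ?case using cm_refl[OF M] by auto
next
  case (CMbox \<phi> \<psi> \<chi>)
  then show ?case by auto
next
  case (CCbox \<phi> \<psi> \<chi>)
  then show ?case by auto
next
  case (CNdia \<phi>)
  then show ?case using cm_refl[OF M] by (auto simp: Neg_def)
next
  case (CKdia \<phi> \<psi> \<chi>)
  show ?case unfolding sat.simps
  proof (intro ballI impI)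
    fix a b c assume a: "a \<in> worlds M" "leq M w a" "\<forall>w'\<in>worlds M. \<forall>v\<in>worlds M. leq M a w' \<longrightarrow>
        rel M {u\<in>worlds M. sat M u \<phi>} w' v \<longrightarrow> (\<forall>w''\<in>worlds M. leq M v w'' \<longrightarrow> sat M w'' \<psi> \<longrightarrow> sat M w'' \<chi>)"
      and b: "b \<in> worlds M" "leq M a b" "\<forall>w'\<in>worlds M. leq M b w' \<longrightarrow>
        (\<exists>v\<in>worlds M. rel M {u\<in>worlds M. sat M u \<phi>} w' v \<and> sat M v \<psi>)"
      and c: "c \<in> worlds M" "leq M b c"
    obtain v where v: "v \<in> worlds M" "rel M {u\<in>worlds M. sat M u \<phi>} c v" "sat M v \<psi>"
      using b c cm_refl[OF M] by blast
    have ac: "leq M a c" using cm_trans[OF M] a b c by blast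
    have "\<forall>w''\<in>worlds M. leq M v w'' \<longrightarrow> sat M w'' \<psi> \<longrightarrow> sat M w'' \<chi>" using a(3) c ac v by blast
    then have "sat M v \<chi>" using v cm_refl[OF M] by blast
    then show "\<exists>v\<in>worlds M. rel M {u\<in>worlds M. sat M u \<phi>} c v \<and> sat M v \<chi>" using v by blast
  qed
next
  case (RAbox \<phi> \<rho> \<psi>)
  have "{u\<in>worlds M. sat M u \<phi>} = {u\<in>worlds M. sat M u \<rho>}"
    using valid_Iff_eq[OF M] RAbox.IH by blast
  then show ?case by (simp add: sat_Iff)
next
  case (RCbox \<psi> \<chi> \<phi>)
  have "\<And>u. u \<in> worlds M \<Longrightarrow> sat M u \<psi> = sat M u \<chi>"
    using valid_Iff_eq2[OF M] RCbox.IH by blast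
  then show ?case by (simp add: sat_Iff)
next
  case (RAdia \<phi> \<rho> \<psi>)
  have "{u\<in>worlds M. sat M u \<phi>} = {u\<in>worlds M. sat M u \<rho>}"
    using valid_Iff_eq[OF M] RAdia.IH by blast
  then show ?case by (simp add: sat_Iff)
next
  case (RCdia \<psi> \<chi> \<phi>)
  have "\<And>u. u \<in> worlds M \<Longrightarrow> sat M u \<psi> = sat M u \<chi>"
    using valid_Iff_eq2[OF M] RCdia.IH by blast
  then show ?case by (simp add: sat_Iff)
qed auto


inductive deriv :: "'a fm set \<Rightarrow> 'a fm \<Rightarrow> bool" for \<Gamma> where
  dhyp: "\<phi> \<in> \<Gamma> \<Longrightarrow> deriv \<Gamma> \<phi>"
| dthm: "ConstCK \<phi> \<Longrightarrow> deriv \<Gamma> \<phi>"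
| dmp: "deriv \<Gamma> (Imp \<phi> \<psi>) \<Longrightarrow> deriv \<Gamma> \<phi> \<Longrightarrow> deriv \<Gamma> \<psi>"

lemma CK_id: "ConstCK (Imp a a)"
proof -
  have 1: "ConstCK (Imp (Imp a (Imp (Imp a a) a)) (Imp (Imp a (Imp a a)) (Imp a a)))" by (rule ConstCK.S)
  have 2: "ConstCK (Imp a (Imp (Imp a a) a))" by (rule ConstCK.K)
  have 3: "ConstCK (Imp a (Imp a a))" by (rule ConstCK.K)
  show ?thesis using ConstCK.MP[OF ConstCK.MP[OF 1 2] 3] .
qed

lemma ded: "deriv (insert a \<Gamma>) b \<Longrightarrow> deriv \<Gamma> (Imp a b)"
proof (induction rule: deriv.induct)
  case (dhyp \<phi>)
  then show ?case
  proof
    assume "\<phi> = a" then show ?thesis using CK_id deriv.dthm by blast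
  next
    assume "\<phi> \<in> \<Gamma>" then show ?thesis using deriv.dmp[OF deriv.dthm[OF ConstCK.K] deriv.dhyp] by blast
  qed
next
  case (dthm \<phi>)
  then show ?case using deriv.dmp[OF deriv.dthm[OF ConstCK.K] deriv.dthm] by blast
next
  case (dmp \<phi> \<psi>)
  then show ?case using deriv.dmp[OF deriv.dmp[OF deriv.dthm[OF ConstCK.S]]] by blast
qed

lemma deriv_mono: "deriv \<Gamma> \<phi> \<Longrightarrow> \<Gamma> \<subseteq> \<Delta> \<Longrightarrow> deriv \<Delta> \<phi>"
  by (induction rule: deriv.induct) (auto intro: deriv.intros)

lemma undeduct: "deriv \<Gamma> (Imp a b) \<Longrightarrow> deriv (insert a \<Gamma>) b"
  by (meson deriv.dhyp deriv.dmp deriv_mono insertI1 subset_insertI)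

lemma deriv_compact: "deriv \<Gamma> \<phi> \<Longrightarrow> \<exists>F. finite F \<and> F \<subseteq> \<Gamma> \<and> deriv F \<phi>"
proof (induction rule: deriv.induct)
  case (dhyp \<phi>)
  then show ?case by (intro exI[of _ "{\<phi>}"]) (auto intro: deriv.dhyp)
next
  case (dthm \<phi>)
  then show ?case by (intro exI[of _ "{}"]) (auto intro: deriv.dthm)
next
  case (dmp \<phi> \<psi>)
  then obtain F1 F2 where "finite F1" "F1 \<subseteq> \<Gamma>" "deriv F1 (Imp \<phi> \<psi>)" "finite F2" "F2 \<subseteq> \<Gamma>" "deriv F2 \<phi>" by blast
  then show ?case
    by (intro exI[of _ "F1 \<union> F2"]) (meson deriv.dmp deriv_mono finite_UnI le_sup_iff sup_ge1 sup_ge2)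
qed

lemma deriv_empty: "deriv {} \<phi> \<Longrightarrow> ConstCK \<phi>"
  by (induction rule: deriv.induct) (auto intro: ConstCK.MP)

lemma CK_iff_deriv: "ConstCK \<phi> \<longleftrightarrow> deriv {} \<phi>"
  using deriv_empty deriv.dthm by blast

lemma CK_ded: "deriv {a} b \<Longrightarrow> ConstCK (Imp a b)"
  using ded deriv_empty by blast

lemma d_conjI: "deriv \<Gamma> a \<Longrightarrow> deriv \<Gamma> b \<Longrightarrow> deriv \<Gamma> (Conj a b)"
  by (meson ConstCK.C3 deriv.dmp deriv.dthm)
lemma d_conjE1: "deriv \<Gamma> (Conj a b) \<Longrightarrow> deriv \<Gamma> a"
  by (meson ConstCK.C1 deriv.dmp deriv.dthm)
lemma d_conjE2: "deriv \<Gamma> (Conj a b) \<Longrightarrow> deriv \<Gamma> b"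
  by (meson ConstCK.C2 deriv.dmp deriv.dthm)

lemma CK_iffI: "ConstCK (Imp a b) \<Longrightarrow> ConstCK (Imp b a) \<Longrightarrow> ConstCK (Iff a b)"
  unfolding Iff_def CK_iff_deriv by (rule d_conjI)
lemma CK_iffD1: "ConstCK (Iff a b) \<Longrightarrow> ConstCK (Imp a b)"
  unfolding Iff_def CK_iff_deriv by (rule d_conjE1)
lemma CK_iffD2: "ConstCK (Iff a b) \<Longrightarrow> ConstCK (Imp b a)"
  unfolding Iff_def CK_iff_deriv by (rule d_conjE2)

definition ptheory :: "'a fm set \<Rightarrow> bool" where
  "ptheory \<Gamma> \<longleftrightarrow> (\<forall>\<phi>. deriv \<Gamma> \<phi> \<longrightarrow> \<phi> \<in> \<Gamma>) \<and> Bot \<notin> \<Gamma> \<and> (\<forall>a b. Disj a b \<in> \<Gamma> \<longrightarrow> a \<in> \<Gamma> \<or> b \<in> \<Gamma>)"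

lemma lindenbaum:
  assumes "\<not> deriv \<Gamma> \<phi>"
  shows "\<exists>\<Delta>. \<Gamma> \<subseteq> \<Delta> \<and> ptheory \<Delta> \<and> \<phi> \<notin> \<Delta>"
proof -
  define A where "A = {\<Delta>. \<Gamma> \<subseteq> \<Delta> \<and> \<not> deriv \<Delta> \<phi>}"
  have "\<exists>M\<in>A. \<forall>X\<in>A. M \<subseteq> X \<longrightarrow> X = M"
  proof (rule subset_Zorn_nonempty)
    show "A \<noteq> {}" using assms A_def by blast
  next
    fix C assume C: "C \<noteq> {}" "subset.chain A C"
    have CA: "C \<subseteq> A" using C(2) unfolding subset.chain_def by blast
    have "\<Gamma> \<subseteq> \<Union>C" using C CA A_def by blast
    moreover have "\<not> deriv (\<Union>C) \<phi>"
    proof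
      assume "deriv (\<Union>C) \<phi>"
      then obtain F where F: "finite F" "F \<subseteq> \<Union>C" "deriv F \<phi>" using deriv_compact by blast
      obtain B where "B \<in> C" "F \<subseteq> B" using finite_subset_Union_chain[OF F(1) F(2) C(1) C(2)] by blast
      then show False using F(3) deriv_mono CA A_def by blast
    qed
    ultimately show "\<Union>C \<in> A" using A_def by blast
  qed
  then obtain M where M: "M \<in> A" "\<And>X. X \<in> A \<Longrightarrow> M \<subseteq> X \<Longrightarrow> X = M" by blast
  have GM: "\<Gamma> \<subseteq> M" and nM: "\<not> deriv M \<phi>" using M(1) A_def by auto
  have ins: "deriv (insert \<chi> M) \<phi>" if "\<chi> \<notin> M" for \<chi>
  proof (rule ccontr)
    assume "\<not> deriv (insert \<chi> M) \<phi>"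
    then have "insert \<chi> M \<in> A" using GM A_def by blast
    then have "insert \<chi> M = M" using M(2) by blast
    then show False using that by blast
  qed
  have cl: "\<chi> \<in> M" if "deriv M \<chi>" for \<chi>
  proof (rule ccontr)
    assume "\<chi> \<notin> M"
    then have "deriv M (Imp \<chi> \<phi>)" using ins ded by blast
    then show False using nM that deriv.dmp by blast
  qed
  have bot: "Bot \<notin> M"
  proof
    assume "Bot \<in> M"
    then have "deriv M \<phi>" using deriv.dmp[OF deriv.dthm[OF ConstCK.EFQ] deriv.dhyp] by blast
    then show False using nM by blast
  qed
  have pr: "a \<in> M \<or> b \<in> M" if "Disj a b \<in> M" for a b
  proof (rule ccontr)
    assume "\<not> (a \<in> M \<or> b \<in> M)"
    then have "deriv M (Imp a \<phi>)" "deriv M (Imp b \<phi>)" using ins ded by blast+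
    then have "deriv M \<phi>"
      using deriv.dmp[OF deriv.dmp[OF deriv.dmp[OF deriv.dthm[OF ConstCK.D3]]] deriv.dhyp[OF that]] by blast
    then show False using nM by blast
  qed
  have "ptheory M" unfolding ptheory_def using cl bot pr by blast
  then show ?thesis using GM nM deriv.dhyp by blast
qed



lemma pt_closed: "ptheory \<Gamma> \<Longrightarrow> deriv \<Gamma> \<phi> \<Longrightarrow> \<phi> \<in> \<Gamma>"
  unfolding ptheory_def by blast
lemma pt_bot: "ptheory \<Gamma> \<Longrightarrow> Bot \<notin> \<Gamma>"
  unfolding ptheory_def by blast
lemma pt_thm: "ptheory \<Gamma> \<Longrightarrow> ConstCK \<phi> \<Longrightarrow> \<phi> \<in> \<Gamma>"
  using pt_closed deriv.dthm by blast
lemma pt_mp: "ptheory \<Gamma> \<Longrightarrow> Imp a b \<in> \<Gamma> \<Longrightarrow> a \<in> \<Gamma> \<Longrightarrow> b \<in> \<Gamma>"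
  using pt_closed deriv.dmp deriv.dhyp by metis
lemma pt_thm_mp: "ptheory \<Gamma> \<Longrightarrow> ConstCK (Imp a b) \<Longrightarrow> a \<in> \<Gamma> \<Longrightarrow> b \<in> \<Gamma>"
  using pt_mp pt_thm by blast
lemma pt_conj: "ptheory \<Gamma> \<Longrightarrow> Conj a b \<in> \<Gamma> \<longleftrightarrow> a \<in> \<Gamma> \<and> b \<in> \<Gamma>"
  by (meson d_conjE1 d_conjE2 d_conjI deriv.dhyp pt_closed)
lemma pt_disj: "ptheory \<Gamma> \<Longrightarrow> Disj a b \<in> \<Gamma> \<longleftrightarrow> a \<in> \<Gamma> \<or> b \<in> \<Gamma>"
  unfolding ptheory_def using ConstCK.D1 ConstCK.D2 deriv.dthm deriv.dmp deriv.dhyp by metis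
lemma pt_imp: "ptheory \<Gamma> \<Longrightarrow> Imp a b \<in> \<Gamma> \<longleftrightarrow> deriv (insert a \<Gamma>) b"
  using pt_closed ded undeduct deriv.dhyp by metis

lemma CK_Top: "ConstCK Top"
  unfolding Top_def Neg_def by (rule ConstCK.EFQ)

lemma CK_box: "ConstCK \<psi> \<Longrightarrow> ConstCK (BoxTo \<phi> \<psi>)"
proof -
  assume a: "ConstCK \<psi>"
  have "ConstCK (Imp \<psi> Top)" using ConstCK.MP[OF ConstCK.K CK_Top] .
  moreover have "ConstCK (Imp Top \<psi>)" using ConstCK.MP[OF ConstCK.K a] .
  ultimately have "ConstCK (Iff \<psi> Top)" by (rule CK_iffI)
  then have "ConstCK (Imp (BoxTo \<phi> Top) (BoxTo \<phi> \<psi>))" using CK_iffD2 ConstCK.RCbox by blast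
  then show ?thesis using ConstCK.MP ConstCK.CNbox by blast
qed

lemma box_mono:
  assumes P: "ptheory \<Gamma>" and I: "ConstCK (Imp a b)" and B: "BoxTo \<phi> a \<in> \<Gamma>"
  shows "BoxTo \<phi> b \<in> \<Gamma>"
proof -
  have "deriv {a} (Conj a b)"
    using d_conjI[OF deriv.dhyp deriv.dmp[OF deriv.dthm[OF I] deriv.dhyp]] by blast
  then have "ConstCK (Imp a (Conj a b))" by (rule CK_ded)
  then have "ConstCK (Iff a (Conj a b))" using CK_iffI ConstCK.C1 by blast
  then have "ConstCK (Imp (BoxTo \<phi> a) (BoxTo \<phi> (Conj a b)))" using CK_iffD1 ConstCK.RCbox by blast
  then have "BoxTo \<phi> (Conj a b) \<in> \<Gamma>" using pt_thm_mp[OF P] B by blast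
  then have "Conj (BoxTo \<phi> a) (BoxTo \<phi> b) \<in> \<Gamma>" using pt_thm_mp[OF P ConstCK.CMbox] by blast
  then show ?thesis using pt_conj[OF P] by blast
qed

lemma box_conj:
  assumes P: "ptheory \<Gamma>" and "BoxTo \<phi> a \<in> \<Gamma>" "BoxTo \<phi> b \<in> \<Gamma>"
  shows "BoxTo \<phi> (Conj a b) \<in> \<Gamma>"
  using assms pt_conj[OF P] pt_thm_mp[OF P ConstCK.CCbox] by blast

definition box_inv :: "'a fm \<Rightarrow> 'a fm set \<Rightarrow> 'a fm set" where
  "box_inv \<phi> \<Gamma> = {\<psi>. BoxTo \<phi> \<psi> \<in> \<Gamma>}"

lemma box_deriv:
  assumes P: "ptheory \<Gamma>"
  shows "deriv (box_inv \<phi> \<Gamma>) \<psi> \<Longrightarrow> BoxTo \<phi> \<psi> \<in> \<Gamma>"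
proof (induction rule: deriv.induct)
  case (dhyp \<psi>)
  then show ?case by (simp add: box_inv_def)
next
  case (dthm \<psi>)
  then show ?case using pt_thm[OF P] CK_box by blast
next
  case (dmp a b)
  have c: "BoxTo \<phi> (Conj (Imp a b) a) \<in> \<Gamma>" using box_conj[OF P] dmp.IH by blast
  have "deriv {Conj (Imp a b) a} b"
    using deriv.dmp[OF d_conjE1 d_conjE2] deriv.dhyp by blast
  then have "ConstCK (Imp (Conj (Imp a b) a) b)" by (rule CK_ded)
  then show ?case using box_mono[OF P _ c] by blast
qed

lemma dia_deriv:
  assumes P: "ptheory \<Gamma>" and D: "DiaTo \<phi> \<theta> \<in> \<Gamma>" and H: "deriv (insert \<theta> (box_inv \<phi> \<Gamma>)) \<psi>"
  shows "DiaTo \<phi> \<psi> \<in> \<Gamma>"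
proof -
  have "BoxTo \<phi> (Imp \<theta> \<psi>) \<in> \<Gamma>" using box_deriv[OF P ded[OF H]] .
  then show ?thesis using pt_thm_mp[OF P ConstCK.CKdia] pt_mp[OF P] D by blast
qed

lemma dia_bot: "ptheory \<Gamma> \<Longrightarrow> DiaTo \<phi> Bot \<notin> \<Gamma>"
  using pt_thm[of \<Gamma>, OF _ ConstCK.CNdia] pt_mp pt_bot unfolding Neg_def by blast

lemma box_RA: "ptheory \<Gamma> \<Longrightarrow> ConstCK (Iff \<phi> \<phi>') \<Longrightarrow> BoxTo \<phi> \<psi> \<in> \<Gamma> \<Longrightarrow> BoxTo \<phi>' \<psi> \<in> \<Gamma>"
  using ConstCK.RAbox CK_iffD1 pt_thm_mp by blast
lemma dia_RA: "ptheory \<Gamma> \<Longrightarrow> ConstCK (Iff \<phi> \<phi>') \<Longrightarrow> DiaTo \<phi> \<psi> \<in> \<Gamma> \<Longrightarrow> DiaTo \<phi>' \<psi> \<in> \<Gamma>"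
  using ConstCK.RAdia CK_iffD1 pt_thm_mp by blast
lemma CK_iff_sym: "ConstCK (Iff \<phi> \<phi>') \<Longrightarrow> ConstCK (Iff \<phi>' \<phi>)"
  using CK_iffI CK_iffD1 CK_iffD2 by blast



definition enc :: "'a fm set \<Rightarrow> 'a fm set \<Rightarrow> 'a fm set" where
  "enc \<Gamma> A = (\<lambda>f. Conj f Bot) ` \<Gamma> \<union> (\<lambda>f. Disj f Bot) ` A"
definition GG :: "'a fm set \<Rightarrow> 'a fm set" where "GG X = {f. Conj f Bot \<in> X}"
definition TT :: "'a fm set \<Rightarrow> 'a fm set" where "TT X = {f. Disj f Bot \<in> X}"

lemma GG_enc[simp]: "GG (enc \<Gamma> A) = \<Gamma>" unfolding GG_def enc_def by auto
lemma TT_enc[simp]: "TT (enc \<Gamma> A) = A" unfolding TT_def enc_def by auto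

definition CW :: "'a fm set set" where
  "CW = {enc \<Gamma> A | \<Gamma> A. ptheory \<Gamma> \<and> (A = {} \<or> (\<exists>\<psi>. A = {\<psi>}))}"

lemma CW_pt: "X \<in> CW \<Longrightarrow> ptheory (GG X)" unfolding CW_def by auto
lemma CW_T: "X \<in> CW \<Longrightarrow> TT X = {} \<or> (\<exists>\<psi>. TT X = {\<psi>})" unfolding CW_def by auto
lemma CW_enc0: "ptheory \<Gamma> \<Longrightarrow> enc \<Gamma> {} \<in> CW" unfolding CW_def by blast
lemma CW_enc1: "ptheory \<Gamma> \<Longrightarrow> enc \<Gamma> {\<psi>} \<in> CW" unfolding CW_def by blast

definition Sset :: "'a fm set \<Rightarrow> 'a fm set \<Rightarrow> 'a fm \<Rightarrow> 'a fm set set" where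
  "Sset \<Gamma> A \<phi>' = {\<Delta>. box_inv \<phi>' \<Gamma> \<subseteq> \<Delta> \<and> (\<forall>\<psi>\<in>A. DiaTo \<phi>' \<psi> \<notin> \<Gamma> \<longrightarrow> \<psi> \<notin> \<Delta>)}"

definition CM :: "('a fm set, 'a) cmodel" where
  "CM = \<lparr>worlds = CW, leq = (\<lambda>X Y. X \<in> CW \<and> Y \<in> CW \<and> GG X \<subseteq> GG Y),
         rel = (\<lambda>Xs X Y. X \<in> CW \<and> Y \<in> CW \<and> (\<exists>\<phi>'. Xs = {u\<in>CW. \<phi>' \<in> GG u} \<and> GG Y \<in> Sset (GG X) (TT X) \<phi>')),
         val = (\<lambda>X. {p. Atom p \<in> GG X})\<rparr>"

lemma CM_simps[simp]: "worlds CM = CW"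
  "leq CM X Y \<longleftrightarrow> X \<in> CW \<and> Y \<in> CW \<and> GG X \<subseteq> GG Y"
  "rel CM Xs X Y \<longleftrightarrow> X \<in> CW \<and> Y \<in> CW \<and> (\<exists>\<phi>'. Xs = {u\<in>CW. \<phi>' \<in> GG u} \<and> GG Y \<in> Sset (GG X) (TT X) \<phi>')"
  "val CM X = {p. Atom p \<in> GG X}"
  unfolding CM_def by simp_all

lemma not_CK_Bot: "\<not> ConstCK (Bot :: 'a fm)"
proof
  assume "ConstCK (Bot :: 'a fm)"
  let ?M = "\<lparr>worlds = {()}, leq = (\<lambda>_ _. True), rel = (\<lambda>_ _ _. False), val = (\<lambda>_. {})\<rparr> :: (unit, 'a) cmodel"
  have "is_cmodel ?M" unfolding is_cmodel_def by simp
  from sound[OF \<open>ConstCK Bot\<close> this, of "()"] show False by simp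
qed

lemma CW_ne: "CW \<noteq> {}"
proof -
  have "\<not> deriv {} (Bot :: 'a fm)" using not_CK_Bot deriv_empty by blast
  then obtain \<Delta> :: "'a fm set" where "ptheory \<Delta>" using lindenbaum by blast
  then show ?thesis using CW_enc0 by blast
qed

lemma CM_is: "is_cmodel CM"
  unfolding is_cmodel_def
  apply (intro conjI)
  subgoal using CW_ne by simp
  subgoal by simp
  subgoal by auto
  subgoal by simp
  subgoal by auto
  subgoal by simp
  done

lemma ante_eq1:
  assumes "{u\<in>CW. \<phi>' \<in> GG u} = {u\<in>CW. \<phi> \<in> GG u}"
  shows "ConstCK (Imp \<phi> \<phi>')"
proof (rule ccontr)
  assume "\<not> ConstCK (Imp \<phi> \<phi>')"
  then have "\<not> deriv {\<phi>} \<phi>'" using CK_ded by blast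
  then obtain \<Delta> where D: "{\<phi>} \<subseteq> \<Delta>" "ptheory \<Delta>" "\<phi>' \<notin> \<Delta>" using lindenbaum by blast
  then have "enc \<Delta> {} \<in> {u\<in>CW. \<phi> \<in> GG u}" using CW_enc0 by auto
  then have "enc \<Delta> {} \<in> {u\<in>CW. \<phi>' \<in> GG u}" using assms by simp
  then show False using D by simp
qed

lemma ante_eq:
  assumes "{u\<in>CW. \<phi>' \<in> GG u} = {u\<in>CW. \<phi> \<in> GG u}"
  shows "ConstCK (Iff \<phi> \<phi>')"
  using ante_eq1[OF assms] ante_eq1[OF assms[symmetric]] CK_iffI by blast

lemma truth: "X \<in> CW \<Longrightarrow> sat CM X \<chi> \<longleftrightarrow> \<chi> \<in> GG X"
proof (induction \<chi> arbitrary: X)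
  case (Atom x)
  then show ?case by simp
next
  case Bot
  then show ?case using pt_bot CW_pt by auto
next
  case (Conj \<chi>1 \<chi>2)
  then show ?case using pt_conj[OF CW_pt[OF Conj.prems]] by simp
next
  case (Disj \<chi>1 \<chi>2)
  then show ?case using pt_disj[OF CW_pt[OF Disj.prems]] by simp
next
  case (Imp a b)
  have P: "ptheory (GG X)" using CW_pt Imp.prems by blast
  show ?case
  proof
    assume S: "sat CM X (Imp a b)"
    show "Imp a b \<in> GG X"
    proof (rule ccontr)
      assume "Imp a b \<notin> GG X"
      then have "\<not> deriv (insert a (GG X)) b" using pt_imp[OF P] by blast
      then obtain \<Delta> where D: "insert a (GG X) \<subseteq> \<Delta>" "ptheory \<Delta>" "b \<notin> \<Delta>" using lindenbaum by blast
      have W: "enc \<Delta> {} \<in> CW" using CW_enc0 D by blast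
      have "sat CM (enc \<Delta> {}) a" using Imp.IH(1)[OF W] D by simp
      then have "sat CM (enc \<Delta> {}) b" using S W Imp.prems D by auto
      then show False using Imp.IH(2)[OF W] D by simp
    qed
  next
    assume I: "Imp a b \<in> GG X"
    show "sat CM X (Imp a b)"
      unfolding sat.simps
    proof (intro ballI impI)
      fix w' assume w': "w' \<in> worlds CM" "leq CM X w'" "sat CM w' a"
      have "a \<in> GG w'" using w' Imp.IH(1) by simp
      moreover have "Imp a b \<in> GG w'" using I w' by auto
      ultimately have "b \<in> GG w'" using pt_mp CW_pt w' by auto
      then show "sat CM w' b" using w' Imp.IH(2) by simp
    qed
  qed
next
  case (BoxTo a b)
  have P: "ptheory (GG X)" using CW_pt BoxTo.prems by blast
  have Seq: "{u\<in>worlds CM. sat CM u a} = {u\<in>CW. a \<in> GG u}" using BoxTo.IH(1) by auto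
  show ?case
  proof
    assume S: "sat CM X (BoxTo a b)"
    show "BoxTo a b \<in> GG X"
    proof (rule ccontr)
      assume "BoxTo a b \<notin> GG X"
      then have "\<not> deriv (box_inv a (GG X)) b" using box_deriv[OF P] by blast
      then obtain \<Delta> where D: "box_inv a (GG X) \<subseteq> \<Delta>" "ptheory \<Delta>" "b \<notin> \<Delta>" using lindenbaum by blast
      have W: "enc \<Delta> {} \<in> CW" using CW_enc0 D by blast
      have W': "enc (GG X) {} \<in> CW" using CW_enc0 P by blast
      have L: "leq CM X (enc (GG X) {})" using W' BoxTo.prems by simp
      have R: "rel CM {u\<in>worlds CM. sat CM u a} (enc (GG X) {}) (enc \<Delta> {})"
        unfolding Seq using W W' D by (auto simp: Sset_def)
      have "sat CM (enc \<Delta> {}) b" using S W W' L R unfolding sat.simps CM_simps(1) by blast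
      then show False using BoxTo.IH(2)[OF W] D by simp
    qed
  next
    assume I: "BoxTo a b \<in> GG X"
    show "sat CM X (BoxTo a b)"
      unfolding sat.simps
    proof (intro ballI impI)
      fix w' v assume w': "w' \<in> worlds CM" "v \<in> worlds CM" "leq CM X w'"
        "rel CM {u\<in>worlds CM. sat CM u a} w' v"
      then obtain \<phi>' where ph: "{u\<in>CW. \<phi>' \<in> GG u} = {u\<in>CW. a \<in> GG u}"
          "GG v \<in> Sset (GG w') (TT w') \<phi>'" unfolding Seq by auto
      have "BoxTo a b \<in> GG w'" using I w' by auto
      then have "BoxTo \<phi>' b \<in> GG w'" using box_RA[OF CW_pt ante_eq[OF ph(1)]] w' by auto
      then have "b \<in> GG v" using ph(2) unfolding Sset_def box_inv_def by blast
      then show "sat CM v b" using w' BoxTo.IH(2) by simp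
    qed
  qed
next
  case (DiaTo a b)
  have P: "ptheory (GG X)" using CW_pt DiaTo.prems by blast
  have Seq: "{u\<in>worlds CM. sat CM u a} = {u\<in>CW. a \<in> GG u}" using DiaTo.IH(1) by auto
  show ?case
  proof
    assume S: "sat CM X (DiaTo a b)"
    show "DiaTo a b \<in> GG X"
    proof (rule ccontr)
      assume N: "DiaTo a b \<notin> GG X"
      have W': "enc (GG X) {b} \<in> CW" using CW_enc1 P by blast
      have L: "leq CM X (enc (GG X) {b})" using W' DiaTo.prems by simp
      have "\<exists>v\<in>CW. rel CM {u\<in>worlds CM. sat CM u a} (enc (GG X) {b}) v \<and> sat CM v b"
        using S W' L unfolding sat.simps CM_simps(1) by blast
      then obtain v where v: "v \<in> CW" "rel CM {u\<in>worlds CM. sat CM u a} (enc (GG X) {b}) v" "sat CM v b"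
        by blast
      then obtain \<phi>' where ph: "{u\<in>CW. \<phi>' \<in> GG u} = {u\<in>CW. a \<in> GG u}"
          "GG v \<in> Sset (GG X) {b} \<phi>'" unfolding Seq by auto
      have "DiaTo \<phi>' b \<notin> GG X"
        using N dia_RA[OF P CK_iff_sym[OF ante_eq[OF ph(1)]]] by blast
      then have "b \<notin> GG v" using ph(2) unfolding Sset_def by blast
      then show False using v DiaTo.IH(2) by simp
    qed
  next
    assume I: "DiaTo a b \<in> GG X"
    show "sat CM X (DiaTo a b)"
      unfolding sat.simps
    proof (intro ballI impI)
      fix w' assume w': "w' \<in> worlds CM" "leq CM X w'"
      have P': "ptheory (GG w')" using CW_pt w' by auto
      have I': "DiaTo a b \<in> GG w'" using I w' by auto
      obtain \<tau> where tau: "DiaTo a \<tau> \<notin> GG w'" "\<forall>\<psi>0\<in>TT w'. DiaTo a \<psi>0 \<notin> GG w' \<longrightarrow> \<psi>0 = \<tau>"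
      proof (cases "\<exists>\<psi>0. TT w' = {\<psi>0} \<and> DiaTo a \<psi>0 \<notin> GG w'")
        case True
        then show ?thesis using that by blast
      next
        case False
        have "TT w' = {} \<or> (\<exists>\<psi>. TT w' = {\<psi>})" using CW_T w' by simp
        then have "\<forall>\<psi>0\<in>TT w'. DiaTo a \<psi>0 \<in> GG w'" using False by auto
        then show ?thesis using that[of Bot] dia_bot[OF P'] by blast
      qed
      have "\<not> deriv (insert b (box_inv a (GG w'))) \<tau>" using dia_deriv[OF P' I'] tau(1) by blast
      then obtain \<Delta> where D: "insert b (box_inv a (GG w')) \<subseteq> \<Delta>" "ptheory \<Delta>" "\<tau> \<notin> \<Delta>"
        using lindenbaum by blast
      have W: "enc \<Delta> {} \<in> CW" using CW_enc0 D by blast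
      have R: "rel CM {u\<in>worlds CM. sat CM u a} w' (enc \<Delta> {})"
        unfolding Seq using W w' D tau(2) by (auto simp: Sset_def)
      have "sat CM (enc \<Delta> {}) b" using DiaTo.IH(2)[OF W] D by simp
      then show "\<exists>v\<in>worlds CM. rel CM {u\<in>worlds CM. sat CM u a} w' v \<and> sat CM v b"
        using W R unfolding CM_simps(1) by blast
    qed
  qed
qed

lemma complete:
  assumes "valid_in (CM :: ('a fm set, 'a) cmodel) \<phi>"
  shows "ConstCK \<phi>"
proof (rule ccontr)
  assume "\<not> ConstCK \<phi>"
  then have "\<not> deriv {} \<phi>" using deriv_empty by blast
  then obtain \<Delta> where D: "ptheory \<Delta>" "\<phi> \<notin> \<Delta>" using lindenbaum by blast
  have W: "enc \<Delta> {} \<in> CW" using CW_enc0 D by blast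
  have "sat CM (enc \<Delta> {}) \<phi>" using assms W unfolding valid_in_def by simp
  then show False using truth[OF W] D by simp
qed

theorem theorem9:
  fixes \<phi> :: "'a fm"
  shows "(ConstCK \<phi> \<longleftrightarrow>
            (\<forall>M :: ('a fm set, 'a) cmodel. is_cmodel M \<longrightarrow> valid_in M \<phi>))
       \<and> (\<forall>M :: ('w, 'a) cmodel. is_cmodel M \<longrightarrow> ConstCK \<phi> \<longrightarrow> valid_in M \<phi>)"
proof (intro conjI allI impI iffI)
  fix M :: "('a fm set, 'a) cmodel"
  assume a: "ConstCK \<phi>" "is_cmodel M"
  show "valid_in M \<phi>" unfolding valid_in_def using sound[OF a] by blast
next
  assume "\<forall>M :: ('a fm set, 'a) cmodel. is_cmodel M \<longrightarrow> valid_in M \<phi>"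
  then have "valid_in (CM :: ('a fm set, 'a) cmodel) \<phi>" using CM_is by blast
  then show "ConstCK \<phi>" by (rule complete)
next
  fix M :: "('w, 'a) cmodel"
  assume a: "is_cmodel M" "ConstCK \<phi>"
  show "valid_in M \<phi>" unfolding valid_in_def using sound[OF a(2) a(1)] by blast
qed

end
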